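(* Let $G$ be a graph containing no cycle of length 6, let $x\in V(G)$, and let $A$ be a connected component of $G[N_2(x)]$ which contains an odd cycle. Then $|N(x)\cap N(V(A))|=1$.
   Context: All graphs are finite, simple and undirected; "containing no cycle of length 6" means having no subgraph (not necessarily induced) isomorphic to $C_6$. $N_i(S)$ denotes the set of vertices at distance exactly $i$ from the vertex set $S$, $N(S)=N_1(S)$, $N(v)=N(\{v\})$, $N_2(v)=N_2(\{v\})$. *)

theory Defs
  imports Main
begin

definition graph :: "'a set \<Rightarrow> ('a \<Rightarrow> 'a \<Rightarrow> bool) \<Rightarrow> bool" where
  "graph V E \<longleftrightarrow> finite V \<and> (\<forall>x y. E x y \<longrightarrow> x \<in> V \<and> y \<in> V)
     \<and> (\<forall>x y. E x y \<longrightarrow> E y x) \<and> (\<forall>x. \<not> E x x)"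

definition walk :: "('a \<Rightarrow> 'a \<Rightarrow> bool) \<Rightarrow> 'a list \<Rightarrow> bool" where
  "walk E xs \<longleftrightarrow> xs \<noteq> [] \<and> (\<forall>i. Suc i < length xs \<longrightarrow> E (xs ! i) (xs ! Suc i))"

definition is_cycle :: "'a set \<Rightarrow> ('a \<Rightarrow> 'a \<Rightarrow> bool) \<Rightarrow> 'a list \<Rightarrow> bool" where
  "is_cycle V E xs \<longleftrightarrow> length xs \<ge> 3 \<and> distinct xs \<and> set xs \<subseteq> V
     \<and> (\<forall>i < length xs. E (xs ! i) (xs ! ((Suc i) mod length xs)))"

definition has_cycle_of_length :: "'a set \<Rightarrow> ('a \<Rightarrow> 'a \<Rightarrow> bool) \<Rightarrow> nat \<Rightarrow> bool" where
  "has_cycle_of_length V E k \<longleftrightarrow> (\<exists>xs. is_cycle V E xs \<and> length xs = k)"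

definition reach_within :: "'a set \<Rightarrow> ('a \<Rightarrow> 'a \<Rightarrow> bool) \<Rightarrow> nat \<Rightarrow> 'a set \<Rightarrow> 'a \<Rightarrow> bool" where
  "reach_within V E i S v \<longleftrightarrow> (\<exists>xs. walk E xs \<and> set xs \<subseteq> V \<and> hd xs \<in> S \<and> last xs = v
      \<and> length xs \<le> Suc i)"

text \<open>N_i(S): vertices at distance exactly i from S.\<close>
definition nbhd_i :: "'a set \<Rightarrow> ('a \<Rightarrow> 'a \<Rightarrow> bool) \<Rightarrow> nat \<Rightarrow> 'a set \<Rightarrow> 'a set" where
  "nbhd_i V E i S = {v \<in> V. reach_within V E i S v \<and> (i = 0 \<or> \<not> reach_within V E (i - 1) S v)}"

definition induced :: "('a \<Rightarrow> 'a \<Rightarrow> bool) \<Rightarrow> 'a set \<Rightarrow> 'a \<Rightarrow> 'a \<Rightarrow> bool" where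
  "induced E W x y \<longleftrightarrow> E x y \<and> x \<in> W \<and> y \<in> W"

definition is_component :: "'a set \<Rightarrow> ('a \<Rightarrow> 'a \<Rightarrow> bool) \<Rightarrow> 'a set \<Rightarrow> bool" where
  "is_component W F A \<longleftrightarrow> (\<exists>a \<in> W. A = {v. \<exists>xs. walk F xs \<and> set xs \<subseteq> W \<and> hd xs = a \<and> last xs = v})"

end

theory Submission
  imports Defs
begin

lemma walk_single[simp]: "walk E [a]"
  by (simp add: walk_def)

lemma walk_cons2[simp]: "walk E (a#b#xs) \<longleftrightarrow> E a b \<and> walk E (b#xs)"
proof
  assume "walk E (a#b#xs)"
  then show "E a b \<and> walk E (b#xs)"
    unfolding walk_def by (auto; metis Suc_less_eq length_Cons nth_Cons_Suc)
next
  assume h: "E a b \<and> walk E (b#xs)"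
  show "walk E (a#b#xs)" unfolding walk_def
  proof (intro conjI allI impI)
    fix i assume "Suc i < length (a#b#xs)"
    then show "E ((a#b#xs) ! i) ((a#b#xs) ! Suc i)"
      using h unfolding walk_def by (cases i) auto
  qed simp
qed

lemma len_le3: "xs \<noteq> [] \<Longrightarrow> length xs \<le> 3 \<Longrightarrow>
   (\<exists>a. xs=[a]) \<or> (\<exists>a b. xs=[a,b]) \<or> (\<exists>a b c. xs=[a,b,c])"
proof (cases xs)
  case (Cons a t)
  assume "length xs \<le> 3"
  then show ?thesis using Cons
    by (cases t; cases "tl t"; cases "tl (tl t)"; auto)
qed simp

lemma reach0: "reach_within V E 0 S v \<longleftrightarrow> v \<in> S \<and> v \<in> V"
proof
  assume "reach_within V E 0 S v"
  then obtain xs where "walk E xs" "set xs \<subseteq> V" "hd xs \<in> S" "last xs = v" "length xs \<le> 1"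
    unfolding reach_within_def by auto
  moreover have "xs \<noteq> []" using \<open>walk E xs\<close> by (simp add: walk_def)
  ultimately show "v \<in> S \<and> v \<in> V" using len_le3[of xs] by auto
next
  assume "v \<in> S \<and> v \<in> V"
  then show "reach_within V E 0 S v" unfolding reach_within_def
    by (intro exI[of _ "[v]"]) auto
qed

lemma reach1: assumes "graph V E"
  shows "reach_within V E (Suc 0) S v \<longleftrightarrow> (v \<in> S \<and> v \<in> V) \<or> (\<exists>a\<in>S. E a v)"
proof
  assume "reach_within V E (Suc 0) S v"
  then obtain xs where "walk E xs" "set xs \<subseteq> V" "hd xs \<in> S" "last xs = v" "length xs \<le> 2"
    unfolding reach_within_def by auto
  moreover have "xs \<noteq> []" using \<open>walk E xs\<close> by (simp add: walk_def)
  ultimately show "(v \<in> S \<and> v \<in> V) \<or> (\<exists>a\<in>S. E a v)" using len_le3[of xs] by auto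
next
  assume "(v \<in> S \<and> v \<in> V) \<or> (\<exists>a\<in>S. E a v)"
  then show "reach_within V E (Suc 0) S v"
  proof
    assume "v \<in> S \<and> v \<in> V" then show ?thesis unfolding reach_within_def
      by (intro exI[of _ "[v]"]) auto
  next
    assume "\<exists>a\<in>S. E a v"
    then obtain a where "a \<in> S" "E a v" by auto
    then show ?thesis using assms unfolding reach_within_def graph_def
      by (intro exI[of _ "[a,v]"]) auto
  qed
qed

lemma reach2: assumes "graph V E" "x \<in> V"
  shows "reach_within V E 2 {x} v \<longleftrightarrow> v = x \<or> E x v \<or> (\<exists>m. E x m \<and> E m v)"
proof
  assume "reach_within V E 2 {x} v"
  then obtain xs where "walk E xs" "set xs \<subseteq> V" "hd xs \<in> {x}" "last xs = v" "length xs \<le> 3"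
    unfolding reach_within_def by auto
  moreover have "xs \<noteq> []" using \<open>walk E xs\<close> by (simp add: walk_def)
  ultimately show "v = x \<or> E x v \<or> (\<exists>m. E x m \<and> E m v)" using len_le3[of xs] by auto
next
  assume h: "v = x \<or> E x v \<or> (\<exists>m. E x m \<and> E m v)"
  show "reach_within V E 2 {x} v"
  proof (cases "v = x")
    case True then show ?thesis using assms unfolding reach_within_def
      by (intro exI[of _ "[v]"]) auto
  next
    case False
    show ?thesis
    proof (cases "E x v")
      case True then show ?thesis using assms unfolding reach_within_def graph_def
        by (intro exI[of _ "[x,v]"]) auto
    next
      case F2: False
      then obtain m where "E x m" "E m v" using h False by auto
      then show ?thesis using assms unfolding reach_within_def graph_def
        by (intro exI[of _ "[x,m,v]"]) auto
    qed
  qed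
qed

lemma N1: assumes "graph V E"
  shows "nbhd_i V E 1 S = {v. v \<notin> S \<and> (\<exists>a\<in>S. E a v)}"
  using assms unfolding nbhd_i_def
  by (auto simp: reach0 reach1[OF assms] graph_def)

lemma N2: assumes "graph V E" "x \<in> V"
  shows "nbhd_i V E 2 {x} = {v. v \<noteq> x \<and> \<not> E x v \<and> (\<exists>m. E x m \<and> E m v)}"
  using assms unfolding nbhd_i_def
  by (auto simp: reach2[OF assms] reach1[OF assms(1)] graph_def)

lemma c6_key:
  assumes g: "graph V E" and nc: "\<not> has_cycle_of_length V E 6" and xV: "x \<in> V"
    and W: "W = {v. v \<noteq> x \<and> \<not> E x v \<and> (\<exists>m. E x m \<and> E m v)}"
    and a: "a \<in> W" and p: "p \<in> W" and b: "b \<in> W" and ab: "a \<noteq> b"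
    and e1: "E a p" "E p b" "E x u" "E u a" "E x w" "E w b"
  shows "u = w"
proof (rule ccontr)
  assume uw: "u \<noteq> w"
  let ?c = "[x,u,a,p,b,w]"
  have irr: "\<And>z. \<not> E z z" and sym: "\<And>y z. E y z \<Longrightarrow> E z y"
    and inV: "\<And>y z. E y z \<Longrightarrow> y \<in> V \<and> z \<in> V" using g unfolding graph_def by auto
  have d: "distinct ?c"
    using a p b ab uw e1 irr W by auto
  have sV: "set ?c \<subseteq> V" using xV inV e1 by auto
  have ed: "\<forall>i < length ?c. E (?c ! i) (?c ! ((Suc i) mod length ?c))"
  proof (intro allI impI)
    fix i assume "i < length ?c"
    then have "i = 0 \<or> i = 1 \<or> i = 2 \<or> i = 3 \<or> i = 4 \<or> i = 5" by auto
    then show "E (?c ! i) (?c ! ((Suc i) mod length ?c))"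
      using e1 sym by auto
  qed
  have "is_cycle V E ?c" unfolding is_cycle_def using d sV ed by simp
  then have "has_cycle_of_length V E 6" unfolding has_cycle_of_length_def
    by (intro exI[of _ ?c]) simp
  then show False using nc by simp
qed

lemma walk_hd_last:
  assumes "walk F xs" and "\<And>z t. F z t \<Longrightarrow> z \<in> S \<longleftrightarrow> t \<in> S"
  shows "hd xs \<in> S \<longleftrightarrow> last xs \<in> S"
  using assms(1)
proof (induction xs)
  case Nil then show ?case by (simp add: walk_def)
next
  case (Cons a xs)
  show ?case
  proof (cases xs)
    case Nil then show ?thesis by simp
  next
    case (Cons b ys)
    then have "F a b" "walk F xs" using Cons.prems by auto
    then show ?thesis using Cons.IH assms(2)[of a b] Cons by auto
  qed
qed


theorem lemma2p3:
  fixes V :: "'a set" and E :: "'a \<Rightarrow> 'a \<Rightarrow> bool" and x :: 'a and A :: "'a set"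
  assumes "graph V E"
    and "\<not> has_cycle_of_length V E 6"
    and "x \<in> V"
    and "is_component (nbhd_i V E 2 {x}) (induced E (nbhd_i V E 2 {x})) A"
    and "\<exists>k. odd k \<and> has_cycle_of_length A (induced E (nbhd_i V E 2 {x})) k"
  shows "card (nbhd_i V E 1 {x} \<inter> nbhd_i V E 1 A) = 1"
proof -
  note g = assms(1) and nc = assms(2) and xV = assms(3)
  define W where "W = nbhd_i V E 2 {x}"
  have Wd: "W = {v. v \<noteq> x \<and> \<not> E x v \<and> (\<exists>m. E x m \<and> E m v)}"
    unfolding W_def using N2[OF g xV] .
  define F where "F = induced E W"
  have irr: "\<And>z. \<not> E z z" and sym: "\<And>y z. E y z \<Longrightarrow> E z y"
    using g unfolding graph_def by auto
  note key = c6_key[OF g nc xV Wd]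
  obtain a0 where a0: "a0 \<in> W" and Adef: "A = {v. \<exists>xs. walk F xs \<and> set xs \<subseteq> W \<and> hd xs = a0 \<and> last xs = v}"
    using assms(4) unfolding is_component_def W_def F_def by auto
  obtain k c where ok: "odd k" and cyc: "is_cycle A F c" and lk: "length c = k"
    using assms(5) unfolding has_cycle_of_length_def W_def F_def by auto
  have k3: "k \<ge> 3" and dc: "distinct c" and cA: "set c \<subseteq> A"
    and ce: "\<And>i. i < k \<Longrightarrow> F (c ! i) (c ! (Suc i mod k))"
    using cyc lk unfolding is_cycle_def by auto
  have AW: "A \<subseteq> W"
  proof
    fix v assume "v \<in> A"
    then obtain xs where "walk F xs" "set xs \<subseteq> W" "last xs = v" using Adef by auto
    then show "v \<in> W" using last_in_set[of xs] by (auto simp: walk_def)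
  qed
  define cc where "cc i = c ! (i mod k)" for i
  have kpos: "k > 0" using k3 by simp
  have ccW: "cc i \<in> W" for i
    using cA AW kpos lk unfolding cc_def by (meson nth_mem mod_less_divisor subsetD)
  have ccE: "E (cc i) (cc (Suc i))" for i
  proof -
    have "F (c ! (i mod k)) (c ! (Suc (i mod k) mod k))" using ce kpos by simp
    then show ?thesis unfolding cc_def F_def induced_def by (simp add: mod_Suc_eq)
  qed
  have ccd: "cc i \<noteq> cc (i + 2)" for i
  proof
    assume "cc i = cc (i + 2)"
    then have "i mod k = (i + 2) mod k" unfolding cc_def
      using dc lk kpos by (simp add: nth_eq_iff_index_eq)
    then have "k dvd (i + 2) - i" by (metis le_add1 mod_eq_dvd_iff_nat)
    then have "k dvd 2" by simp
    then show False using k3 by (auto dest: dvd_imp_le)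
  qed
  obtain u where u1: "E x u" "E u (cc 0)" using ccW[of 0] Wd by auto
  define Q where "Q v \<longleftrightarrow> E u v \<and> (\<forall>m. E x m \<and> E m v \<longrightarrow> m = u)" for v
  have step: "Q b" if H: "a \<in> W" "p \<in> W" "b \<in> W" "a \<noteq> b" "E a p" "E p b" "Q a" for a p b
  proof -
    obtain m' where m': "E x m'" "E m' b" using H(3) Wd by auto
    have "u = m'" using key[OF H(1-6)] H(7) m' u1(1) unfolding Q_def by blast
    moreover have "m = u" if "E x m" "E m b" for m
      using key[OF \<open>a \<in> W\<close> \<open>p \<in> W\<close> \<open>b \<in> W\<close> \<open>a \<noteq> b\<close> \<open>E a p\<close> \<open>E p b\<close>] \<open>Q a\<close> that u1(1)
      unfolding Q_def by blast
    ultimately show ?thesis using m' unfolding Q_def by blast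
  qed
  have Q0: "Q (cc 0)"
  proof -
    obtain m' where m': "E x m'" "E m' (cc 2)" using ccW[of 2] Wd by auto
    have d02: "cc 0 \<noteq> cc 2" using ccd[of 0] by (simp add: numeral_2_eq_2)
    have e01: "E (cc 0) (cc 1)" and e12: "E (cc 1) (cc 2)"
      using ccE[of 0] ccE[of 1] by (simp_all add: numeral_2_eq_2)
    have "m = m'" if "E x m" "E m (cc 0)" for m
      using key[OF ccW[of 0] ccW[of 1] ccW[of 2] d02 e01 e12] that m' sym by blast
    then show ?thesis using u1 unfolding Q_def by metis
  qed
  have Qev: "Q (cc (2 * j))" for j
  proof (induction j)
    case 0 then show ?case using Q0 by simp
  next
    case (Suc j)
    have "Suc (Suc (2 * j)) = 2 * j + 2" by simp
    then show ?case
      using step[OF ccW ccW ccW ccd[of "2*j"] ccE[of "2*j"] _ Suc.IH] ccE[of "Suc (2*j)"]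
      by simp
  qed
  have Qc: "Q (c ! i)" if "i < k" for i
  proof -
    have h: "2 * ((k + 1) div 2) = k + 1" using ok by simp
    have "2 * (i * ((k + 1) div 2)) = i + k * i" using h
      by (metis add.commute mult.commute mult.left_commute mult_Suc_right Suc_eq_plus1)
    then have "(2 * (i * ((k + 1) div 2))) mod k = i" using that by simp
    then show ?thesis using Qev[of "i * ((k + 1) div 2)"] unfolding cc_def by simp
  qed
  define S where "S = {z \<in> W. Q z \<and> (\<exists>y\<in>W. E z y \<and> Q y)}"
  have clos: "t \<in> S" if hz: "z \<in> S" and ht: "t \<in> W" and hzt: "E z t" for z t
  proof -
    obtain y where y: "y \<in> W" "E z y" "Q y" "z \<in> W" "Q z" using hz unfolding S_def by auto
    have "Q t"
    proof (cases "t = y")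
      case True then show ?thesis using y by simp
    next
      case False
      then show ?thesis using step[OF y(1) y(4) ht _ sym[OF y(2)] hzt y(3)] by auto
    qed
    then show ?thesis unfolding S_def using ht hzt y by (auto intro: sym)
  qed
  have closF: "z \<in> S \<longleftrightarrow> t \<in> S" if "F z t" for z t
    using that clos sym unfolding F_def induced_def by blast
  have c0S: "c ! 0 \<in> S"
  proof -
    have "cc 0 = c ! 0" "cc 1 = c ! 1" using k3 unfolding cc_def by auto
    moreover have "Q (c ! 1)" using Qc k3 by simp
    ultimately show ?thesis unfolding S_def using ccW[of 0] ccW[of 1] ccE[of 0] Qc[of 0] kpos
      by auto
  qed
  have "c ! 0 \<in> A" using cA kpos lk by (metis nth_mem subsetD)
  then obtain xs0 where "walk F xs0" "hd xs0 = a0" "last xs0 = c ! 0" using Adef by auto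
  then have a0S: "a0 \<in> S" using walk_hd_last[of F xs0 S] closF c0S by auto
  have AS: "v \<in> S" if vA: "v \<in> A" for v
  proof -
    obtain xs where "walk F xs" "hd xs = a0" "last xs = v" using vA Adef by auto
    then show ?thesis using walk_hd_last[of F xs S] closF a0S by auto
  qed
  have uW: "u \<notin> A" using AW Wd u1 by auto
  have "nbhd_i V E 1 {x} \<inter> nbhd_i V E 1 A = {u}"
  proof
    show "{u} \<subseteq> nbhd_i V E 1 {x} \<inter> nbhd_i V E 1 A"
    proof -
      have "E (c ! 0) u" using u1 sym kpos unfolding cc_def by simp
      then show ?thesis using N1[OF g] u1 uW \<open>c ! 0 \<in> A\<close> irr by auto
    qed
  next
    show "nbhd_i V E 1 {x} \<inter> nbhd_i V E 1 A \<subseteq> {u}"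
    proof
      fix v assume "v \<in> nbhd_i V E 1 {x} \<inter> nbhd_i V E 1 A"
      then obtain a where "E x v" "a \<in> A" "E a v" using N1[OF g] by auto
      then show "v \<in> {u}" using AS[of a] sym unfolding S_def Q_def by auto
    qed
  qed
  then show ?thesis by simp
qed

end
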